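(* Let $d\ge2$, $n\ge d+1$, $p\ge2$ a prime, $\Lambda\in X_{n,d}$, $M=M^p_n(\Lambda)$ with group $H_0\cong\mathbb{Z}_p^n$. If $K<H_0$ is a subgroup isomorphic to $\mathbb{Z}_p^{n-r}$ (for some integer $r\ge0$) acting freely on $M$ (i.e. no non-trivial element of $K$ has a fixed point on $M$), then $n+1\le (p^r-1)/(p-1)$. In particular no such $K$ exists with $r=1$, and for $p=2$ none exists with $r=2$.
   Context: For $q=[\rho_1:\cdots:\rho_{d+1}]\in\mathbb{P}^d$ let $L_q=\{\rho_1t_1+\cdots+\rho_{d+1}t_{d+1}=0\}$. Hyperplanes are in general position if any $\min\{N,d+1\}$ of their $N$ coefficient vectors are linearly independent. Let $e_1,\dots,e_{d+1}$ be the coordinate points of $\mathbb{P}^d$ and $e_{d+2}=[1:\cdots:1]$. For $\Lambda=(\lambda_{i,j})_{1\le i\le n-d-1,\,1\le j\le d}\in\mathbb{C}^{d(n-d-1)}$ put $L_j(\Lambda)=L_{e_j}$ ($1\le j\le d+2$) and $L_j(\Lambda)=L_{[\lambda_{j-d-2,1}:\cdots:\lambda_{j-d-2,d}:1]}$ ($d+3\le j\le n+1$); $X_{n,d}$ is the set of $\Lambda$ for which $L_1(\Lambda),\dots,L_{n+1}(\Lambda)$ are in general position. For $\Lambda\in X_{n,d}$, setting $\lambda_{0,j}=1$, $M^k_n(\Lambda)\subset\mathbb{P}^n$ is the common zero set of $\lambda_{i,1}x_1^k+\cdots+\lambda_{i,d}x_d^k+x_{d+1}^k+x_{d+2+i}^k$,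 $i=0,\dots,n-d-1$. $H_0=\langle\varphi_1,\dots,\varphi_{n+1}\rangle$, where $\varphi_j$ multiplies the $j$-th homogeneous coordinate by $e^{2\pi\sqrt{-1}/k}$. *)

theory Defs
  imports Complex_Main "HOL-Algebra.Algebra"
begin

(* Homogeneous coordinate vectors of P^n: functions nat => complex, coordinates 1..n+1,
   zero outside. A point of P^n is the class of a nonzero vector under nonzero scaling. *)

definition proj_class :: "(nat \<Rightarrow> complex) \<Rightarrow> (nat \<Rightarrow> complex) set" where
  "proj_class x = {(\<lambda>j. c * x j) | c. c \<noteq> 0}"

definition proj_space :: "nat \<Rightarrow> (nat \<Rightarrow> complex) set set" where
  "proj_space n = {proj_class x | x. (\<forall>j. j \<notin> {1..n+1} \<longrightarrow> x j = 0) \<and> (\<exists>j\<in>{1..n+1}. x j \<noteq> 0)}"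

definition zeta :: "nat \<Rightarrow> complex" where
  "zeta k = cis (2 * pi / real k)"

definition phi :: "nat \<Rightarrow> nat \<Rightarrow> nat \<Rightarrow> (nat \<Rightarrow> complex) set \<Rightarrow> (nat \<Rightarrow> complex) set" where
  "phi k n j = (\<lambda>P \<in> proj_space n. (\<lambda>x. (\<lambda>i. if i = j then zeta k * x i else x i)) ` P)"

definition H0 :: "nat \<Rightarrow> nat \<Rightarrow> ((nat \<Rightarrow> complex) set \<Rightarrow> (nat \<Rightarrow> complex) set) set" where
  "H0 k n = generate (BijGroup (proj_space n)) {phi k n j | j. j \<in> {1..n+1}}"

(* coefficient vector (in C^{d+1}, coordinates 1..d+1) of the hyperplane L_j(Lambda) *)
definition coeffvec :: "nat \<Rightarrow> (nat \<Rightarrow> nat \<Rightarrow> complex) \<Rightarrow> nat \<Rightarrow> nat \<Rightarrow> complex" where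
  "coeffvec d Lam j =
     (if j \<le> d + 1 then (\<lambda>t. if t = j then 1 else 0)
      else if j = d + 2 then (\<lambda>t. 1)
      else (\<lambda>t. if t \<le> d then Lam (j - d - 2) t else 1))"

definition lin_indep_family :: "nat \<Rightarrow> (nat \<Rightarrow> nat \<Rightarrow> complex) \<Rightarrow> nat set \<Rightarrow> bool" where
  "lin_indep_family d v S \<longleftrightarrow>
     (\<forall>c. (\<forall>t\<in>{1..d+1}. (\<Sum>j\<in>S. c j * v j t) = 0) \<longrightarrow> (\<forall>j\<in>S. c j = 0))"

definition general_position :: "nat \<Rightarrow> nat \<Rightarrow> (nat \<Rightarrow> nat \<Rightarrow> complex) \<Rightarrow> bool" where
  "general_position d N v \<longleftrightarrow>
     (\<forall>S. S \<subseteq> {1..N} \<and> card S = min N (d + 1) \<longrightarrow> lin_indep_family d v S)"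

(* X_{n,d}: Lambda = (lambda_{i,j}), 1<=i<=n-d-1, 1<=j<=d, represented as nat => nat => complex
   (values outside this index range are irrelevant) *)
definition X_nd :: "nat \<Rightarrow> nat \<Rightarrow> (nat \<Rightarrow> nat \<Rightarrow> complex) set" where
  "X_nd n d = {Lam. general_position d (n + 1) (coeffvec d Lam)}"

definition lam_ext :: "(nat \<Rightarrow> nat \<Rightarrow> complex) \<Rightarrow> nat \<Rightarrow> nat \<Rightarrow> complex" where
  "lam_ext Lam i j = (if i = 0 then 1 else Lam i j)"

definition fermat_poly :: "nat \<Rightarrow> nat \<Rightarrow> (nat \<Rightarrow> nat \<Rightarrow> complex) \<Rightarrow> nat \<Rightarrow> (nat \<Rightarrow> complex) \<Rightarrow> complex" where
  "fermat_poly k d Lam i x =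
     (\<Sum>j\<in>{1..d}. lam_ext Lam i j * x j ^ k) + x (d + 1) ^ k + x (d + 2 + i) ^ k"

definition M_var :: "nat \<Rightarrow> nat \<Rightarrow> nat \<Rightarrow> (nat \<Rightarrow> nat \<Rightarrow> complex) \<Rightarrow> (nat \<Rightarrow> complex) set set" where
  "M_var k n d Lam = {P \<in> proj_space n. \<forall>x\<in>P. \<forall>i\<in>{0..n-d-1}. fermat_poly k d Lam i x = 0}"

end

theory Submission
  imports Defs
begin


lemma zeta_pow: "zeta p ^ m = cis (2 * pi * real m / real p)"
  by (simp add: zeta_def DeMoivre mult_ac)

lemma zeta_p: "p > 0 \<Longrightarrow> zeta p ^ p = 1"
  by (simp add: zeta_pow)

lemma zeta_nz: "zeta p ^ m \<noteq> 0"
  by (simp add: zeta_def cis_neq_zero)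

lemma zeta_pow_mult_p: "p > 0 \<Longrightarrow> zeta p ^ (p * q) = 1"
  by (simp add: power_mult zeta_p)

lemma zeta_mod: "p > 0 \<Longrightarrow> zeta p ^ m = zeta p ^ (m mod p)"
proof -
  assume p: "p > 0"
  have "m = p * (m div p) + m mod p" by simp
  then have "zeta p ^ m = zeta p ^ (p * (m div p)) * zeta p ^ (m mod p)"
    by (metis power_add)
  then show ?thesis using zeta_pow_mult_p[OF p] by simp
qed

lemma zeta_eq_1: assumes p: "p > 0" and h: "zeta p ^ m = 1" shows "p dvd m"
proof -
  have inj: "inj_on (\<lambda>k. cis (2 * pi * real k / real p)) {..<p}"
    using bij_betw_roots_unity[OF p] by (simp add: bij_betw_def)
  have "cis (2 * pi * real (m mod p) / real p) = cis (2 * pi * real 0 / real p)"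
    using h zeta_mod[OF p, of m] by (simp add: zeta_pow)
  then have "m mod p = 0" using inj_onD[OF inj] p by simp
  then show ?thesis by auto
qed

lemma img_class: "(\<lambda>x. \<lambda>k. s k * x k) ` proj_class y = proj_class (\<lambda>k. s k * y k)"
proof -
  have "(\<lambda>x. \<lambda>k. s k * x k) ` {(\<lambda>j. c * y j) | c. c \<noteq> 0} = {(\<lambda>j. c * (s j * y j)) | c. c \<noteq> 0}"
  proof (rule Set.set_eqI, rule iffI)
    fix z assume "z \<in> (\<lambda>x. \<lambda>k. s k * x k) ` {(\<lambda>j. c * y j) | c. c \<noteq> 0}"
    then obtain c where "c \<noteq> 0" "z = (\<lambda>k. s k * (c * y k))" by auto
    then show "z \<in> {(\<lambda>j. c * (s j * y j)) | c. c \<noteq> 0}" by (auto simp: algebra_simps)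
  next
    fix z assume "z \<in> {(\<lambda>j. c * (s j * y j)) | c. c \<noteq> 0}"
    then obtain c where c: "c \<noteq> 0" "z = (\<lambda>j. c * (s j * y j))" by auto
    then have "z = (\<lambda>k. s k * ((\<lambda>j. c * y j) k))" by (auto simp: algebra_simps)
    moreover have "(\<lambda>j. c * y j) \<in> {(\<lambda>j. c * y j) | c. c \<noteq> 0}" using c by auto
    ultimately show "z \<in> (\<lambda>x. \<lambda>k. s k * x k) ` {(\<lambda>j. c * y j) | c. c \<noteq> 0}" by (rule image_eqI)
  qed
  then show ?thesis unfolding proj_class_def .
qed

lemma class_scale: assumes c: "c \<noteq> 0" shows "proj_class (\<lambda>k. c * y k) = proj_class y"
proof -
  have "{(\<lambda>j. e * (c * y j)) | e. e \<noteq> 0} = {(\<lambda>j. e * y j) | e. e \<noteq> 0}"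
  proof (rule Set.set_eqI, rule iffI)
    fix z assume "z \<in> {(\<lambda>j. e * (c * y j)) | e. e \<noteq> 0}"
    then obtain e where e: "e \<noteq> 0" "z = (\<lambda>j. e * (c * y j))" by auto
    then have "z = (\<lambda>j. (e * c) * y j)" "e * c \<noteq> 0" using c by (auto simp: algebra_simps)
    then show "z \<in> {(\<lambda>j. e * y j) | e. e \<noteq> 0}" by blast
  next
    fix z assume "z \<in> {(\<lambda>j. e * y j) | e. e \<noteq> 0}"
    then obtain e where e: "e \<noteq> 0" "z = (\<lambda>j. e * y j)" by auto
    then have "z = (\<lambda>j. (e / c) * (c * y j))" "e / c \<noteq> 0" using c by (auto simp: algebra_simps)
    then show "z \<in> {(\<lambda>j. e * (c * y j)) | e. e \<noteq> 0}" by blast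
  qed
  then show ?thesis unfolding proj_class_def .
qed

lemma class_eq: "proj_class u = proj_class v \<Longrightarrow> \<exists>c. c \<noteq> 0 \<and> u = (\<lambda>k. c * v k)"
proof -
  assume "proj_class u = proj_class v"
  moreover have "u \<in> proj_class u" unfolding proj_class_def by (auto intro: exI[of _ 1])
  ultimately show ?thesis unfolding proj_class_def by auto
qed

definition Fm :: "nat \<Rightarrow> nat \<Rightarrow> (nat \<Rightarrow> nat) \<Rightarrow> (nat \<Rightarrow> complex) set \<Rightarrow> (nat \<Rightarrow> complex) set" where
  "Fm p n a = (\<lambda>P\<in>proj_space n. (\<lambda>x. \<lambda>k. zeta p ^ a k * x k) ` P)"

lemma Fm_class: "proj_class y \<in> proj_space n \<Longrightarrow> Fm p n a (proj_class y) = proj_class (\<lambda>k. zeta p ^ a k * y k)"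
  by (simp add: Fm_def img_class)

lemma Fm_maps: assumes "P \<in> proj_space n" shows "Fm p n a P \<in> proj_space n"
proof -
  obtain x where x: "P = proj_class x" "\<forall>j. j \<notin> {1..n+1} \<longrightarrow> x j = 0" "\<exists>j\<in>{1..n+1}. x j \<noteq> 0"
    using assms unfolding proj_space_def by auto
  have "Fm p n a P = proj_class (\<lambda>k. zeta p ^ a k * x k)" using Fm_class assms x by metis
  moreover have "(\<forall>j. j \<notin> {1..n+1} \<longrightarrow> zeta p ^ a j * x j = 0) \<and> (\<exists>j\<in>{1..n+1}. zeta p ^ a j * x j \<noteq> 0)"
    using x zeta_nz by auto
  ultimately show ?thesis unfolding proj_space_def by blast
qed

lemma Fm_comp: assumes "P \<in> proj_space n" shows "Fm p n a (Fm p n b P) = Fm p n (\<lambda>k. a k + b k) P"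
proof -
  obtain x where x: "P = proj_class x" using assms unfolding proj_space_def by auto
  have 1: "Fm p n b P = proj_class (\<lambda>k. zeta p ^ b k * x k)" using Fm_class assms x by metis
  have 2: "proj_class (\<lambda>k. zeta p ^ b k * x k) \<in> proj_space n" using Fm_maps assms 1 by metis
  show ?thesis unfolding 1 using Fm_class[OF 2] Fm_class assms x
    by (simp add: power_add algebra_simps)
qed

lemma Fm_eq: assumes "c \<noteq> 0" "\<forall>k\<in>{1..n+1}. zeta p ^ a k = c * zeta p ^ b k"
  shows "Fm p n a = Fm p n b"
proof
  fix P show "Fm p n a P = Fm p n b P"
  proof (cases "P \<in> proj_space n")
    case False then show ?thesis by (simp add: Fm_def)
  next
    case True
    then obtain x where x: "P = proj_class x" "\<forall>j. j \<notin> {1..n+1} \<longrightarrow> x j = 0"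
      unfolding proj_space_def by auto
    have "(\<lambda>k. zeta p ^ a k * x k) = (\<lambda>k. c * (zeta p ^ b k * x k))"
    proof
      fix k show "zeta p ^ a k * x k = c * (zeta p ^ b k * x k)"
        using assms x by (cases "k \<in> {1..n+1}") auto
    qed
    then show ?thesis using Fm_class True x class_scale[OF assms(1)] by metis
  qed
qed

lemma Fm_id: assumes "p > 0" "\<forall>k. p dvd a k" shows "Fm p n a = (\<lambda>P\<in>proj_space n. P)"
proof -
  have "\<And>k. zeta p ^ a k = 1" using assms zeta_pow_mult_p by (metis dvdE)
  then show ?thesis unfolding Fm_def by (intro restrict_ext) simp
qed

lemma pm1_aux: "p > 0 \<Longrightarrow> (p - 1) * x + x = p * (x::nat)"
  by (cases p) auto

lemma Fm_Bij: assumes p: "p > 0" shows "Fm p n a \<in> Bij (proj_space n)"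
proof -
  let ?g = "Fm p n (\<lambda>k. (p - 1) * a k)"
  have inv1: "\<forall>P\<in>proj_space n. ?g (Fm p n a P) = P"
  proof
    fix P assume P: "P \<in> proj_space n"
    have "?g (Fm p n a P) = Fm p n (\<lambda>k. (p - 1) * a k + a k) P" using Fm_comp[OF P] by simp
    also have "(\<lambda>k. (p - 1) * a k + a k) = (\<lambda>k. p * a k)" using p
      using pm1_aux[OF p] by auto
    also have "Fm p n (\<lambda>k. p * a k) P = P" using Fm_id[OF p, of "\<lambda>k. p * a k"] P by simp
    finally show "?g (Fm p n a P) = P" .
  qed
  have inv2: "\<forall>P\<in>proj_space n. Fm p n a (?g P) = P"
  proof
    fix P assume P: "P \<in> proj_space n"
    have "Fm p n a (?g P) = Fm p n (\<lambda>k. a k + (p - 1) * a k) P" using Fm_comp[OF P] by simp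
    also have "(\<lambda>k. a k + (p - 1) * a k) = (\<lambda>k. p * a k)" using p
      using pm1_aux[OF p] by (auto simp: add.commute)
    also have "Fm p n (\<lambda>k. p * a k) P = P" using Fm_id[OF p, of "\<lambda>k. p * a k"] P by simp
    finally show "Fm p n a (?g P) = P" .
  qed
  have "bij_betw (Fm p n a) (proj_space n) (proj_space n)"
    by (rule bij_betw_byWitness[OF inv1 inv2]) (auto simp: Fm_maps)
  moreover have "Fm p n a \<in> extensional (proj_space n)" by (simp add: Fm_def)
  ultimately show ?thesis by (simp add: Bij_def)
qed

lemma Fm_mult: assumes p: "p > 0"
  shows "Fm p n a \<otimes>\<^bsub>BijGroup (proj_space n)\<^esub> Fm p n b = Fm p n (\<lambda>k. a k + b k)"
proof -
  have "Fm p n a \<otimes>\<^bsub>BijGroup (proj_space n)\<^esub> Fm p n b = compose (proj_space n) (Fm p n a) (Fm p n b)"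
    using Fm_Bij[OF p] by (simp add: BijGroup_def)
  also have "\<dots> = Fm p n (\<lambda>k. a k + b k)"
    unfolding compose_def
  proof (rule ext)
    fix P show "(\<lambda>x\<in>proj_space n. Fm p n a (Fm p n b x)) P = Fm p n (\<lambda>k. a k + b k) P"
      by (cases "P \<in> proj_space n") (simp_all add: Fm_comp, simp add: Fm_def)
  qed
  finally show ?thesis .
qed

lemma Fm_one: assumes p: "p > 0" shows "Fm p n (\<lambda>k. 0) = \<one>\<^bsub>BijGroup (proj_space n)\<^esub>"
  using Fm_id[OF p, of "\<lambda>k. 0"] by (simp add: BijGroup_def)

lemma Fm_one': assumes p: "p > 0" "\<forall>k. p dvd a k" shows "Fm p n a = \<one>\<^bsub>BijGroup (proj_space n)\<^esub>"
  using Fm_id[OF p] by (simp add: BijGroup_def)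

lemma Fm_inv: assumes p: "p > 0"
  shows "inv\<^bsub>BijGroup (proj_space n)\<^esub> Fm p n a = Fm p n (\<lambda>k. (p - 1) * a k)"
proof (rule group.inv_equality[OF group_BijGroup])
  have "(\<lambda>k. (p - 1) * a k + a k) = (\<lambda>k. p * a k)" using p
    using pm1_aux[OF p] by auto
  then show "Fm p n (\<lambda>k. (p - 1) * a k) \<otimes>\<^bsub>BijGroup (proj_space n)\<^esub> Fm p n a = \<one>\<^bsub>BijGroup (proj_space n)\<^esub>"
    using Fm_mult[OF p] Fm_one'[OF p, of "\<lambda>k. p * a k"] by simp
qed (auto simp: BijGroup_def Fm_Bij[OF p])

lemma phi_Fm: "phi p n j = Fm p n (\<lambda>k. if k = j then 1 else 0)"
  unfolding phi_def Fm_def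
  by (intro restrict_ext image_cong refl ext) auto

lemma H0_sub: assumes p: "p > 0" shows "H0 p n \<subseteq> range (Fm p n)"
proof
  fix g assume "g \<in> H0 p n"
  then show "g \<in> range (Fm p n)" unfolding H0_def
  proof (induction rule: generate.induct)
    case one then show ?case using Fm_one[OF p] by (metis rangeI)
  next
    case (incl h) then show ?case using phi_Fm by auto
  next
    case (inv h) then show ?case using phi_Fm Fm_inv[OF p] by auto
  next
    case (eng h1 h2) then show ?case using Fm_mult[OF p] by auto
  qed
qed

lemma range_Fm: assumes p: "p > 0"
  shows "finite (range (Fm p n)) \<and> card (range (Fm p n)) \<le> p ^ n"
proof -
  let ?A = "PiE {1..n} (\<lambda>_. {0..<p})"
  let ?g = "\<lambda>a::nat\<Rightarrow>nat. Fm p n (\<lambda>k. if k \<in> {1..n} then a k else 0)"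
  have sub: "range (Fm p n) \<subseteq> ?g ` ?A"
  proof
    fix f assume "f \<in> range (Fm p n)"
    then obtain a where f: "f = Fm p n a" by auto
    define a' where "a' = (\<lambda>k. if k \<in> {1..n} then (a k + (p - 1) * a (n+1)) mod p else undefined)"
    have a'A: "a' \<in> ?A" using p by (auto simp: a'_def)
    have "Fm p n (\<lambda>k. if k \<in> {1..n} then a' k else 0) = Fm p n a"
    proof (rule Fm_eq)
      show "zeta p ^ ((p - 1) * a (n+1)) \<noteq> 0" by (rule zeta_nz)
      show "\<forall>k\<in>{1..n + 1}. zeta p ^ (if k \<in> {1..n} then a' k else 0) = zeta p ^ ((p - 1) * a (n+1)) * zeta p ^ a k"
      proof
        fix k assume k: "k \<in> {1..n+1}"
        show "zeta p ^ (if k \<in> {1..n} then a' k else 0) = zeta p ^ ((p - 1) * a (n+1)) * zeta p ^ a k"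
        proof (cases "k \<in> {1..n}")
          case True
          then show ?thesis using zeta_mod[OF p, of "a k + (p - 1) * a (n+1)"]
            by (simp add: a'_def power_add mult.commute)
        next
          case False
          then have "k = n + 1" using k by auto
          moreover have "(p - 1) * a (n+1) + a (n+1) = p * a (n+1)" using p
            by (rule pm1_aux)
          ultimately show ?thesis using False zeta_pow_mult_p[OF p, of "a (n+1)"]
            by (simp add: power_add[symmetric])
        qed
      qed
    qed
    then show "f \<in> ?g ` ?A" using f a'A by (intro image_eqI[where x=a']) auto
  qed
  have fin: "finite ?A" by (simp add: finite_PiE)
  have "card (?g ` ?A) \<le> card ?A" by (rule card_image_le[OF fin])
  also have "card ?A = p ^ n" by (simp add: card_PiE)
  finally show ?thesis using sub fin by (meson card_mono finite_imageI finite_subset le_trans)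
qed



lemma three_var: "\<exists>z1 z2 z3 :: complex. (z1 \<noteq> 0 \<or> z2 \<noteq> 0 \<or> z3 \<noteq> 0) \<and>
   a1 * z1 + a2 * z2 + a3 * z3 = 0 \<and> b1 * z1 + b2 * z2 + b3 * z3 = 0"
proof -
  consider "a2*b3 - a3*b2 \<noteq> 0 \<or> a3*b1 - a1*b3 \<noteq> 0 \<or> a1*b2 - a2*b1 \<noteq> 0"
    | "a2*b3 - a3*b2 = 0" "a3*b1 - a1*b3 = 0" "a1*b2 - a2*b1 = 0" "a1 \<noteq> 0 \<or> a2 \<noteq> 0"
    | "a2*b3 - a3*b2 = 0" "a3*b1 - a1*b3 = 0" "a1*b2 - a2*b1 = 0" "a1 = 0" "a2 = 0" "b1 \<noteq> 0 \<or> b2 \<noteq> 0"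
    | "a1 = 0" "a2 = 0" "b1 = 0" "b2 = 0"
    by blast
  then show ?thesis
  proof cases
    case 1 then show ?thesis
      by (intro exI[of _ "a2*b3 - a3*b2"] exI[of _ "a3*b1 - a1*b3"] exI[of _ "a1*b2 - a2*b1"])
        (auto simp: algebra_simps)
  next
    case 2 then show ?thesis
      by (intro exI[of _ "a2"] exI[of _ "-a1"] exI[of _ "0"]) (auto simp: algebra_simps)
  next
    case 3 then show ?thesis
      by (intro exI[of _ "b2"] exI[of _ "-b1"] exI[of _ "0"]) (auto simp: algebra_simps)
  next
    case 4 then show ?thesis
      by (intro exI[of _ "1"] exI[of _ "0"] exI[of _ "0"]) auto
  qed
qed

definition croot :: "nat \<Rightarrow> complex \<Rightarrow> complex" where
  "croot p w = rcis (root p (cmod w)) (Arg w / real p)"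

lemma croot_pow: "p > 0 \<Longrightarrow> croot p w ^ p = w"
  by (simp add: croot_def DeMoivre2 real_root_pow_pos2 rcis_cmod_Arg)

lemma croot_0: "croot p 0 = 0"
  by (simp add: croot_def)

lemma point_exists:
  assumes d: "d \<ge> 2" and n: "n \<ge> d + 1" and p: "p > 0"
    and i: "i \<in> {1..n+1}" and j: "j \<in> {1..n+1}"
  shows "\<exists>x. (\<forall>k. k \<notin> {1..n+1} \<longrightarrow> x k = 0) \<and> (\<exists>k\<in>{1..n+1}. x k \<noteq> 0) \<and> x i = 0 \<and> x j = 0
           \<and> proj_class x \<in> M_var p n d Lam"
proof -
  define L where "L q z = (\<Sum>t\<in>{1..d}. lam_ext Lam q t * z t) + z (d+1)" for q and z :: "nat \<Rightarrow> complex"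
  define V where "V k z = (if k \<le> d+1 then z k else L (k-d-2) z)" for k and z :: "nat \<Rightarrow> complex"
  define E where "E s = (\<lambda>t::nat. if t = s then (1::complex) else 0)" for s :: nat
  have lin: "V k (\<lambda>t. z1 * E 1 t + z2 * E 2 t + z3 * E 3 t) = z1 * V k (E 1) + z2 * V k (E 2) + z3 * V k (E 3)"
    for k z1 z2 z3
    unfolding V_def L_def by (auto simp: sum.distrib sum_distrib_left algebra_simps)
  obtain z1 z2 z3 where zz: "z1 \<noteq> 0 \<or> z2 \<noteq> 0 \<or> z3 \<noteq> 0"
    "V i (E 1) * z1 + V i (E 2) * z2 + V i (E 3) * z3 = 0"
    "V j (E 1) * z1 + V j (E 2) * z2 + V j (E 3) * z3 = 0"
    using three_var by blast
  define z where "z = (\<lambda>t. z1 * E 1 t + z2 * E 2 t + z3 * E 3 t)"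
  have Vz: "V i z = 0" "V j z = 0" using zz lin unfolding z_def by (auto simp: algebra_simps)
  define y where "y k = (if k \<in> {1..d+1} then z k else if k \<in> {d+2..n+1} then - L (k-d-2) z else 0)" for k
  have y0: "y k = 0" if "k \<in> {1..n+1}" "V k z = 0" for k
    using that unfolding y_def V_def by (cases "k \<le> d+1") auto
  define x where "x k = croot p (y k)" for k
  have xp: "x k ^ p = y k" for k using croot_pow[OF p] by (simp add: x_def)
  have x0: "x k = 0 \<longleftrightarrow> y k = 0" for k
    using xp[of k] p by (auto simp: x_def croot_0 zero_power)
  have supp: "\<forall>k. k \<notin> {1..n+1} \<longrightarrow> x k = 0"
  proof (intro allI impI)
    fix k assume k: "k \<notin> {1..n+1}"
    then have "k \<notin> {1..d+1}" "k \<notin> {d+2..n+1}" using n by auto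
    then have "y k = 0" unfolding y_def by (simp only: if_False)
    then show "x k = 0" using x0 by simp
  qed
  have nz: "\<exists>k\<in>{1..n+1}. x k \<noteq> 0"
  proof -
    have "y 1 = z1" "y 2 = z2" "y 3 = z3" using d by (auto simp: y_def z_def E_def)
    moreover have "(1::nat) \<in> {1..n+1}" "(2::nat) \<in> {1..n+1}" "(3::nat) \<in> {1..n+1}" using d n by auto
    ultimately show ?thesis using zz(1) x0 by metis
  qed
  have eq: "(\<Sum>t\<in>{1..d}. lam_ext Lam q t * y t) + y (d+1) + y (d+2+q) = 0" if q: "q \<in> {0..n-d-1}" for q
  proof -
    have "(\<Sum>t\<in>{1..d}. lam_ext Lam q t * y t) = (\<Sum>t\<in>{1..d}. lam_ext Lam q t * z t)"
      by (rule sum.cong) (auto simp: y_def)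
    moreover have "y (d+1) = z (d+1)" by (simp add: y_def)
    moreover have "y (d+2+q) = - L q z" using q n by (simp add: y_def)
    ultimately show ?thesis by (simp add: L_def)
  qed
  have inM: "proj_class x \<in> M_var p n d Lam"
    unfolding M_var_def
  proof (intro CollectI conjI ballI)
    show "proj_class x \<in> proj_space n" using supp nz unfolding proj_space_def by blast
  next
    fix x' q assume x': "x' \<in> proj_class x" and q: "q \<in> {0..n-d-1}"
    then obtain c where c: "x' = (\<lambda>k. c * x k)" unfolding proj_class_def by auto
    have "fermat_poly p d Lam q x' = c ^ p * ((\<Sum>t\<in>{1..d}. lam_ext Lam q t * y t) + y (d+1) + y (d+2+q))"
      unfolding fermat_poly_def c by (simp add: power_mult_distrib xp sum_distrib_left algebra_simps)
    then show "fermat_poly p d Lam q x' = 0" using eq[OF q] by simp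
  qed
  show ?thesis using supp nz inM y0[OF i Vz(1)] y0[OF j Vz(2)] x0 by blast
qed



lemma Fm_nontriv:
  assumes p: "p > 0" and i: "i \<in> {1..n+1}" and m: "m \<in> {1..n+1}" and im: "i \<noteq> m"
    and ai: "\<not> p dvd a i" and am: "a m = 0"
  shows "Fm p n a \<noteq> \<one>\<^bsub>BijGroup (proj_space n)\<^esub>"
proof
  assume one: "Fm p n a = \<one>\<^bsub>BijGroup (proj_space n)\<^esub>"
  define x where "x = (\<lambda>k. if k = i \<or> k = m then (1::complex) else 0)"
  have "(\<forall>j. j \<notin> {1..n+1} \<longrightarrow> x j = 0) \<and> (\<exists>j\<in>{1..n+1}. x j \<noteq> 0)"
    using i m by (auto simp: x_def)
  then have P: "proj_class x \<in> proj_space n" unfolding proj_space_def by blast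
  then have "Fm p n a (proj_class x) = proj_class x" using one by (simp add: BijGroup_def)
  then have "proj_class (\<lambda>k. zeta p ^ a k * x k) = proj_class x" using Fm_class[OF P] by simp
  then obtain c where c: "c \<noteq> 0" "(\<lambda>k. zeta p ^ a k * x k) = (\<lambda>k. c * x k)" using class_eq by blast
  from fun_cong[OF c(2), of m] have "c = 1" using am by (simp add: x_def)
  with fun_cong[OF c(2), of i] have "zeta p ^ a i = 1" by (simp add: x_def)
  then show False using zeta_eq_1[OF p] ai by blast
qed

lemma Fm_fix:
  assumes "proj_class x \<in> proj_space n" and "\<forall>k. x k \<noteq> 0 \<longrightarrow> a k = 0"
  shows "Fm p n a (proj_class x) = proj_class x"
proof -
  have "(\<lambda>k. zeta p ^ a k * x k) = x"
  proof
    fix k show "zeta p ^ a k * x k = x k" using assms(2) by (cases "x k = 0") auto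
  qed
  then show ?thesis using Fm_class[OF assms(1)] by simp
qed

lemma ndvd_aux:
  assumes "a < p" "b < p" "a \<noteq> b" shows "\<not> p dvd ((p - 1) * b + (a::nat))"
proof
  assume h: "p dvd ((p - 1) * b + a)"
  have p: "p > 0" using assms by auto
  have e: "(p - 1) * b + a + b = p * b + a" using pm1_aux[OF p, of b] by simp
  have "((p - 1) * b + a + b) mod p = (p * b + a) mod p" by (simp only: e)
  then have "((p - 1) * b + a + b) mod p = a mod p" by simp
  moreover have "((p - 1) * b + a + b) mod p = b mod p"
  proof -
    obtain q where q: "(p - 1) * b + a = p * q" using h by (auto elim: dvdE)
    have "((p - 1) * b + a + b) mod p = (p * q + b) mod p" by (simp only: q)
    also have "\<dots> = b mod p" by simp
    finally show ?thesis .
  qed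
  ultimately show False using assms by simp
qed



theorem mainTheorem5:
  fixes d n p r :: nat
    and Lam :: "nat \<Rightarrow> nat \<Rightarrow> complex"
    and K :: "((nat \<Rightarrow> complex) set \<Rightarrow> (nat \<Rightarrow> complex) set) set"
  assumes "d \<ge> 2" and "n \<ge> d + 1" and "Factorial_Ring.prime p"
    and "Lam \<in> X_nd n d"
    and "r \<le> n"
    and "subgroup K (BijGroup (proj_space n))" and "K \<subseteq> H0 p n"
    and "(BijGroup (proj_space n))\<lparr>carrier := K\<rparr> \<cong>
           product_group {..<n - r} (\<lambda>_. integer_mod_group p)"
    and "\<forall>g\<in>K. g \<noteq> \<one>\<^bsub>BijGroup (proj_space n)\<^esub> \<longrightarrow>
           (\<forall>P\<in>M_var p n d Lam. g P \<noteq> P)"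
  shows "real (n + 1) \<le> (real p ^ r - 1) / (real p - 1) \<and> r \<noteq> 1 \<and> (p = 2 \<longrightarrow> r \<noteq> 2)"
proof -
  note d = assms(1) and n = assms(2) and sg = assms(6) and free = assms(9)
  let ?B = "BijGroup (proj_space n)"
  have p2: "p \<ge> 2" using assms(3) prime_ge_2_nat by blast
  then have p: "p > 0" by simp
  interpret G: group ?B by (rule group_BijGroup)
  have Ksub: "K \<subseteq> range (Fm p n)" using H0_sub[OF p] assms(7) by blast
  have KB: "K \<subseteq> carrier ?B" using sg subgroup.subset by blast
  have cardK: "card K = p ^ (n - r)"
  proof -
    obtain h where "h \<in> iso (?B\<lparr>carrier := K\<rparr>) (product_group {..<n - r} (\<lambda>_. integer_mod_group p))"
      using assms(8) unfolding is_iso_def by blast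
    then have "bij_betw h K (\<Pi>\<^sub>E i\<in>{..<n - r}. {0..<int p})"
      using p by (simp add: iso_def carrier_integer_mod_group)
    then have "card K = card (\<Pi>\<^sub>E i\<in>{..<n - r}. {0..<int p})" by (rule bij_betw_same_card)
    also have "\<dots> = p ^ (n - r)" by (simp add: card_PiE)
    finally show ?thesis .
  qed
  have finR: "finite (range (Fm p n))" and cardR: "card (range (Fm p n)) \<le> p ^ n"
    using range_Fm[OF p] by auto
  have finK: "finite K" using Ksub finR finite_subset by blast
  have notK: "Fm p n c \<notin> K" if i: "i \<in> {1..n+1}" and j: "j \<in> {1..n+1}"
    and supp: "\<forall>k. k \<noteq> i \<and> k \<noteq> j \<longrightarrow> c k = 0" and ci: "\<not> p dvd c i" for i j c
  proof
    assume inK: "Fm p n c \<in> K"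
    obtain m where m: "m \<in> {1..n+1}" "m \<noteq> i" "m \<noteq> j"
    proof -
      have "{1::nat,2,3} \<subseteq> {1..n+1}" using d n by auto
      moreover have "\<exists>m\<in>{1::nat,2,3}. m \<noteq> i \<and> m \<noteq> j" by auto
      ultimately show ?thesis using that by blast
    qed
    have "Fm p n c \<noteq> \<one>\<^bsub>?B\<^esub>" using Fm_nontriv[OF p i m(1)] m supp ci by auto
    moreover obtain x where x: "\<forall>k. k \<notin> {1..n+1} \<longrightarrow> x k = 0" "\<exists>k\<in>{1..n+1}. x k \<noteq> 0"
      "x i = 0" "x j = 0" "proj_class x \<in> M_var p n d Lam"
      using point_exists[OF d n p i j] by blast
    moreover have "Fm p n c (proj_class x) = proj_class x"
    proof (rule Fm_fix)
      show "proj_class x \<in> proj_space n" using x(5) by (simp add: M_var_def)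
      show "\<forall>k. x k \<noteq> 0 \<longrightarrow> c k = 0" using x(3,4) supp by metis
    qed
    ultimately show False using free inK by blast
  qed
  define u where "u j a = Fm p n (\<lambda>k. if k = j then a else 0)" for j a
  have uB: "u j a \<in> carrier ?B" for j a unfolding u_def by (simp add: BijGroup_def Fm_Bij[OF p])
  have u_notK: "u i a \<notin> K" if "i \<in> {1..n+1}" "a \<in> {1..<p}" for i a
    unfolding u_def using that by (intro notK[of i i]) (auto dest: dvd_imp_le)
  have uu_notK: "inv\<^bsub>?B\<^esub> (u j b) \<otimes>\<^bsub>?B\<^esub> u i a \<notin> K"
    if i: "i \<in> {1..n+1}" and a: "a \<in> {1..<p}" and j: "j \<in> {1..n+1}" and b: "b \<in> {1..<p}"
      and ne: "(i, a) \<noteq> (j, b)" for i a j b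
  proof -
    define c where "c k = (p - 1) * (if k = j then b else 0) + (if k = i then a else 0)" for k
    have "inv\<^bsub>?B\<^esub> (u j b) \<otimes>\<^bsub>?B\<^esub> u i a = Fm p n c"
      unfolding u_def Fm_inv[OF p] Fm_mult[OF p] c_def by simp
    moreover have "Fm p n c \<notin> K"
    proof (rule notK[OF i j])
      show "\<forall>k. k \<noteq> i \<and> k \<noteq> j \<longrightarrow> c k = 0" by (simp add: c_def)
      show "\<not> p dvd c i"
      proof (cases "i = j")
        case True
        then have "a \<noteq> b" using ne by simp
        then show ?thesis using ndvd_aux[of a p b] a b True by (simp add: c_def)
      next
        case False
        then show ?thesis using a by (auto simp: c_def dest: dvd_imp_le)
      qed
    qed
    ultimately show ?thesis by simp
  qed
  define \<Phi> where "\<Phi> t = u (fst t) (fst (snd t)) \<otimes>\<^bsub>?B\<^esub> snd (snd t)" for t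
  define D where "D = {1..n+1} \<times> {1..<p} \<times> K"
  have inj: "inj_on \<Phi> D"
  proof (rule inj_onI)
    fix s t assume s: "s \<in> D" and t: "t \<in> D" and e: "\<Phi> s = \<Phi> t"
    obtain i a k where s': "s = (i, a, k)" by (cases s) auto
    obtain j b k' where t': "t = (j, b, k')" by (cases t) auto
    have i: "i \<in> {1..n+1}" and a: "a \<in> {1..<p}" and k: "k \<in> K" using s s' D_def by auto
    have j: "j \<in> {1..n+1}" and b: "b \<in> {1..<p}" and k': "k' \<in> K" using t t' D_def by auto
    have kB: "k \<in> carrier ?B" "k' \<in> carrier ?B" using k k' KB by auto
    have e': "u i a \<otimes>\<^bsub>?B\<^esub> k = u j b \<otimes>\<^bsub>?B\<^esub> k'" using e s' t' by (simp add: \<Phi>_def)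
    show "s = t"
    proof (cases "(i, a) = (j, b)")
      case True
      then have "u i a \<otimes>\<^bsub>?B\<^esub> k = u i a \<otimes>\<^bsub>?B\<^esub> k'" using e' by simp
      then have "k = k'" by (rule G.l_cancel[OF _ kB(1) kB(2) uB])
      then show ?thesis using True s' t' by simp
    next
      case False
      have "inv\<^bsub>?B\<^esub> (u j b) \<otimes>\<^bsub>?B\<^esub> u i a
          = (inv\<^bsub>?B\<^esub> (u j b) \<otimes>\<^bsub>?B\<^esub> (u i a \<otimes>\<^bsub>?B\<^esub> k)) \<otimes>\<^bsub>?B\<^esub> inv\<^bsub>?B\<^esub> k"
        using uB kB by (simp add: G.m_assoc)
      also have "\<dots> = k' \<otimes>\<^bsub>?B\<^esub> inv\<^bsub>?B\<^esub> k"
        unfolding e' using uB kB by (simp add: G.m_assoc[symmetric])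
      also have "\<dots> \<in> K" using sg k k' by (simp add: subgroup.m_closed subgroup.m_inv_closed)
      finally show ?thesis using uu_notK[OF i a j b False] by blast
    qed
  qed
  have img: "\<Phi> ` D \<subseteq> range (Fm p n)"
  proof
    fix y assume "y \<in> \<Phi> ` D"
    then obtain i a k where "(i, a, k) \<in> D" "y = u i a \<otimes>\<^bsub>?B\<^esub> k" by (auto simp: \<Phi>_def)
    moreover then obtain c where "k = Fm p n c" using Ksub D_def by auto
    ultimately show "y \<in> range (Fm p n)" by (simp add: u_def Fm_mult[OF p])
  qed
  have disj: "\<Phi> ` D \<inter> K = {}"
  proof (rule ccontr)
    assume "\<Phi> ` D \<inter> K \<noteq> {}"
    then obtain i a k where ia: "(i, a, k) \<in> D" and inK: "u i a \<otimes>\<^bsub>?B\<^esub> k \<in> K" by (auto simp: \<Phi>_def)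
    have k: "k \<in> K" and kB: "k \<in> carrier ?B" using ia KB D_def by auto
    have "u i a = (u i a \<otimes>\<^bsub>?B\<^esub> k) \<otimes>\<^bsub>?B\<^esub> inv\<^bsub>?B\<^esub> k" using uB kB by (simp add: G.m_assoc)
    also have "\<dots> \<in> K" using sg k inK by (simp add: subgroup.m_closed subgroup.m_inv_closed)
    finally show False using u_notK ia D_def by auto
  qed
  have finD: "finite D" using finK by (simp add: D_def)
  have cardD: "card D = (n + 1) * (p - 1) * card K" by (simp add: D_def card_cartesian_product algebra_simps)
  have "card (\<Phi> ` D) + card K = card (\<Phi> ` D \<union> K)"
    using disj finD finK by (simp add: card_Un_disjoint)
  also have "\<dots> \<le> card (range (Fm p n))" using img Ksub finR by (intro card_mono) auto
  also have "\<dots> \<le> p ^ n" by (rule cardR)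
  finally have ineq: "(n + 1) * (p - 1) * p ^ (n - r) + p ^ (n - r) \<le> p ^ n"
    using card_image[OF inj] cardD cardK by simp
  have "p ^ n = p ^ r * p ^ (n - r)" using assms(5) by (simp add: power_add[symmetric])
  then have "((n + 1) * (p - 1) + 1) * p ^ (n - r) \<le> p ^ r * p ^ (n - r)"
    using ineq by (simp add: algebra_simps)
  then have main: "(n + 1) * (p - 1) + 1 \<le> p ^ r" using p by simp
  have c0: "real (p - 1) = real p - 1" using p2 by (simp add: of_nat_diff)
  have c1: "real ((n + 1) * (p - 1)) = real (n + 1) * (real p - 1)" by (simp only: of_nat_mult c0)
  have c2: "real (p ^ r) = real p ^ r" by simp
  have "real ((n + 1) * (p - 1)) + 1 \<le> real (p ^ r)" using main by linarith
  then have "real (n + 1) * (real p - 1) \<le> real p ^ r - 1" using c1 c2 by linarith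
  then have A: "real (n + 1) \<le> (real p ^ r - 1) / (real p - 1)" using p2
    by (simp add: pos_le_divide_eq)
  have B: "r \<noteq> 1"
  proof
    assume "r = 1"
    then have "(n + 1) * (p - 1) + 1 \<le> p" using main by (simp only: power_one_right)
    moreover have "(n + 1) * (p - 1) \<ge> 2 * (p - 1)" using n d by (intro mult_le_mono1) simp
    ultimately show False using p2 by linarith
  qed
  have C: "p = 2 \<longrightarrow> r \<noteq> 2"
  proof
    assume "p = 2" show "r \<noteq> 2"
    proof
      assume "r = 2" then show False using main \<open>p = 2\<close> n d by simp
    qed
  qed
  show ?thesis using A B C by blast
qed


end
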